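(* For every $\mathcal{A}\subseteq[\omega]^\omega$, Player I has a winning strategy in the reaping* game with respect to $\mathcal{A}$.
   Context: For $x\subseteq\omega$ and $y\in[\omega]^\omega$, $y$ reaps $x$ if $y\subseteq^* x$ or $y\subseteq^*\omega\setminus x$ (where $A\subseteq^* B$ means $A\setminus B$ is finite). For $\mathcal{A}\subseteq[\omega]^\omega$, the reaping* game with respect to $\mathcal{A}$: at round $k$, Player I plays $i_k\in\{0,1\}$ and then Player II plays $j_k\in\{0,1\}$. Player II wins iff $j_k=1$ for infinitely many $k$, $\{k:j_k=1\}\in\mathcal{A}$, and $\{k:j_k=1\}$ reaps $\{k:i_k=1\}$. *)

theory Defs
  imports Main
begin

text \<open>Moves are in \<open>{0,1}\<close>, encoded as bool (True = 1).\<close>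

definition almost_subset :: "nat set \<Rightarrow> nat set \<Rightarrow> bool" where
  "almost_subset A B \<longleftrightarrow> finite (A - B)"

definition reaps :: "nat set \<Rightarrow> nat set \<Rightarrow> bool" where
  "reaps y x \<longleftrightarrow> infinite y \<and> (almost_subset y x \<or> almost_subset y (UNIV - x))"

text \<open>A strategy for Player I: given the list of Player II's previous moves
  \<open>[j_0,...,j_{k-1}]\<close> (Player I's own previous moves are determined by these),
  return the move \<open>i_k\<close>.\<close>
type_synonym strategyI = "bool list \<Rightarrow> bool"

definition playI :: "strategyI \<Rightarrow> (nat \<Rightarrow> bool) \<Rightarrow> nat \<Rightarrow> bool" where
  "playI \<sigma> j k = \<sigma> (map j [0..<k])"

definition II_wins :: "nat set set \<Rightarrow> (nat \<Rightarrow> bool) \<Rightarrow> (nat \<Rightarrow> bool) \<Rightarrow> bool" where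
  "II_wins \<A> i j \<longleftrightarrow> infinite {k. j k} \<and> {k. j k} \<in> \<A> \<and> reaps {k. j k} {k. i k}"

definition winning_strategyI :: "nat set set \<Rightarrow> strategyI \<Rightarrow> bool" where
  "winning_strategyI \<A> \<sigma> \<longleftrightarrow> (\<forall>j. \<not> II_wins \<A> (playI \<sigma> j) j)"

end

theory Submission
  imports Defs "HOL-Library.Infinite_Set"
begin

lemma len_filter: "length (filter j [0..<k]) = card {m. m < k \<and> j m}"
proof (induction k)
  case 0 then show ?case by simp
next
  case (Suc k)
  have "{m. m < Suc k \<and> j m} = {m. m < k \<and> j m} \<union> (if j k then {k} else {})"
    by (auto simp: less_Suc_eq)
  then show ?case using Suc by (auto simp: card_insert_if)
qed

lemma card_enum:
  assumes "infinite (Y::nat set)"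
  shows "card {m. m < enumerate Y n \<and> m \<in> Y} = n"
proof -
  have "{m. m < enumerate Y n \<and> m \<in> Y} = enumerate Y ` {..<n}"
  proof
    show "{m. m < enumerate Y n \<and> m \<in> Y} \<subseteq> enumerate Y ` {..<n}"
    proof
      fix m assume "m \<in> {m. m < enumerate Y n \<and> m \<in> Y}"
      then have m: "m < enumerate Y n" "m \<in> Y" by auto
      then obtain k where "m = enumerate Y k" using enumerate_Ex[OF assms] by blast
      with m assms show "m \<in> enumerate Y ` {..<n}" by auto
    qed
  next
    show "enumerate Y ` {..<n} \<subseteq> {m. m < enumerate Y n \<and> m \<in> Y}"
      using assms enumerate_in_set by auto
  qed
  moreover have "inj (enumerate Y)" using inj_enumerate assms by blast
  ultimately show ?thesis by (simp add: card_image inj_on_subset)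
qed

theorem mainTheorem8:
  fixes \<A> :: "nat set set"
  assumes "\<forall>y\<in>\<A>. infinite y"
  shows "\<exists>\<sigma>. winning_strategyI \<A> \<sigma>"
proof
  let ?\<sigma> = "\<lambda>l. odd (length (filter id l))"
  show "winning_strategyI \<A> ?\<sigma>"
    unfolding winning_strategyI_def
  proof (intro allI notI)
    fix j assume w: "II_wins \<A> (playI ?\<sigma> j) j"
    define Y where "Y = {k. j k}"
    define X where "X = {k. playI ?\<sigma> j k}"
    have inf: "infinite Y" using w unfolding II_wins_def Y_def by blast
    have X: "enumerate Y n \<in> X \<longleftrightarrow> odd n" for n
    proof -
      have "{m. m < enumerate Y n \<and> j m} = {m. m < enumerate Y n \<and> m \<in> Y}"
        by (auto simp: Y_def)
      then show ?thesis using card_enum[OF inf, of n]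
        by (simp add: X_def playI_def len_filter)
    qed
    have injE: "inj (enumerate Y)" using inj_enumerate inf by blast
    have i2: "inj (\<lambda>n::nat. 2*n)" "inj (\<lambda>n::nat. 2*n+1)" by (auto simp: inj_on_def)
    have "(\<lambda>n. enumerate Y (2*n)) ` UNIV \<subseteq> Y - X"
      using X enumerate_in_set[OF inf] by auto
    moreover have "infinite ((\<lambda>n. enumerate Y (2*n)) ` UNIV)"
      by (rule range_inj_infinite) (intro injI, drule injD[OF injE], simp)
    ultimately have a: "infinite (Y - X)" using finite_subset by blast
    have "(\<lambda>n. enumerate Y (2*n+1)) ` UNIV \<subseteq> Y - (UNIV - X)"
      using X enumerate_in_set[OF inf] by auto
    moreover have "infinite ((\<lambda>n. enumerate Y (2*n+1)) ` UNIV)"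
      by (rule range_inj_infinite) (intro injI, drule injD[OF injE], simp)
    ultimately have b: "infinite (Y - (UNIV - X))" using finite_subset by blast
    have "reaps Y X" using w unfolding II_wins_def Y_def X_def by blast
    then show False using a b unfolding reaps_def almost_subset_def by blast
  qed
qed

end
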